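(* Let $X$ be a random variable on $\{1,2,\dots\}$ with probability mass function $f(x)=\frac{x}{(x+1)!}$, $x=1,2,\dots$. Then $\mathbb E(X)=e-1$, $\mathbb E(X^2)=e+1$, $\mathrm{Var}(X)=e(3-e)$, and the moment generating function is \[\mathbb E(e^{tX})=e^{-t}\bigl(1-e^{e^t}+e^{t+e^t}\bigr)\quad\text{for all real } t.\] *)

theory Defs
  imports "HOL-Probability.Probability"
begin

end

theory Submission
  imports Defs
begin

lemma key:
  fixes g :: "nat \<Rightarrow> real"
  assumes P: "prob_space M" and Xm: "X \<in> measurable M (count_space UNIV)"
    and g: "\<And>x. g x \<ge> 0"
    and S: "(\<lambda>x. g x * measure M {\<omega>\<in>space M. X \<omega> = x}) sums S"
  shows "integrable M (\<lambda>\<omega>. g (X \<omega>)) \<and> integral\<^sup>L M (\<lambda>\<omega>. g (X \<omega>)) = S"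
proof -
  interpret prob_space M by (rule P)
  have sets: "{\<omega>\<in>space M. X \<omega> = x} \<in> sets M" for x
    using Xm by measurable
  have meas: "(\<lambda>\<omega>. g (X \<omega>)) \<in> borel_measurable M"
    using Xm by measurable
  have eq: "ennreal (g (X \<omega>)) = (\<Sum>x. ennreal (g x) * indicator {\<omega>\<in>space M. X \<omega> = x} \<omega>)"
    if "\<omega> \<in> space M" for \<omega>
    by (subst suminf_finite[where N="{X \<omega>}"]) (auto simp: that)
  have "(\<integral>\<^sup>+\<omega>. ennreal (g (X \<omega>)) \<partial>M)
      = (\<integral>\<^sup>+\<omega>. (\<Sum>x. ennreal (g x) * indicator {\<omega>\<in>space M. X \<omega> = x} \<omega>) \<partial>M)"
    by (rule nn_integral_cong) (simp add: eq)
  also have "\<dots> = (\<Sum>x. \<integral>\<^sup>+\<omega>. ennreal (g x) * indicator {\<omega>\<in>space M. X \<omega> = x} \<omega> \<partial>M)"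
    by (rule nn_integral_suminf) (use sets in auto)
  also have "\<dots> = (\<Sum>x. ennreal (g x * measure M {\<omega>\<in>space M. X \<omega> = x}))"
  proof (rule arg_cong[where f=suminf], rule ext)
    fix x
    show "(\<integral>\<^sup>+\<omega>. ennreal (g x) * indicator {\<omega>\<in>space M. X \<omega> = x} \<omega> \<partial>M) = ennreal (g x * measure M {\<omega>\<in>space M. X \<omega> = x})"
      by (subst nn_integral_cmult_indicator[OF sets], subst emeasure_eq_measure, rule ennreal_mult''[symmetric]) (rule measure_nonneg)
  qed
  also have "\<dots> = ennreal S"
    using suminf_ennreal2[of "\<lambda>x. g x * measure M {\<omega>\<in>space M. X \<omega> = x}", OF _ sums_summable[OF S]] sums_unique[OF S] g
    by (metis measure_nonneg mult_nonneg_nonneg)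
  finally have N: "(\<integral>\<^sup>+\<omega>. ennreal (g (X \<omega>)) \<partial>M) = ennreal S" .
  show ?thesis
  proof
    show "integrable M (\<lambda>\<omega>. g (X \<omega>))"
      by (rule integrableI_nonneg) (use meas g N in auto)
    have "S \<ge> 0" using S g by (intro sums_le[OF _ sums_zero S]) simp
    then show "integral\<^sup>L M (\<lambda>\<omega>. g (X \<omega>)) = S"
      using integral_eq_nn_integral[OF meas] N g by simp
  qed
qed


lemma fs: "fact (Suc n) = (real n + 1) * (fact n :: real)" "fact (n+1) = (real n + 1) * (fact n :: real)"
  by (simp_all add: algebra_simps)

lemma rs: "real (Suc n) = real n + 1" by simp

lemma g1: "f > 0 \<Longrightarrow> x \<ge> 0 \<Longrightarrow> (x+1)^2 / ((x + 1) * f) = x / f + 1 / (f::real)"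
  proof - assume a: "f>0" "x\<ge>0" then have p: "f*x \<ge> 0" by simp then have q: "f + f*x > 0" using a by linarith then have "(x+1)*f > 0" "f*x+f>0" "f*(x+1) > 0" by (simp_all add: algebra_simps) with q show ?thesis using a by (simp add: field_simps power2_eq_square) qed
lemma g2: "f > 0 \<Longrightarrow> x \<ge> 0 \<Longrightarrow> x * (x / ((x + 1) * f)) = x / f - 1 / f + 1 / ((x+1) * (f::real))"
  proof - assume a: "f>0" "x\<ge>0" then have p: "f*x \<ge> 0" by simp then have q: "f + f*x > 0" using a by linarith then have "(x+1)*f > 0" "f*x+f>0" "f*(x+1) > 0" by (simp_all add: algebra_simps) with q show ?thesis using a by (simp add: field_simps) qed
lemma g3: "f > 0 \<Longrightarrow> x \<ge> 0 \<Longrightarrow> x^2 * (x / ((x + 1) * f)) = x^2 / f - x * (x / ((x+1) * (f::real)))"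
  proof - assume a: "f>0" "x\<ge>0" then have p: "f*x \<ge> 0" by simp then have q: "f + f*x > 0" using a by linarith then have "(x+1)*f > 0" "f*x+f>0" "f*(x+1) > 0" by (simp_all add: algebra_simps) with q show ?thesis using a by (simp add: field_simps power2_eq_square) qed
lemma g4: "f > 0 \<Longrightarrow> x \<ge> 0 \<Longrightarrow> z > 0 \<Longrightarrow> w * (x / ((x + 1) * f)) = w / f - (1/z) * ((z*w) / ((x+1) * (f::real)))"
  proof - assume a: "f>0" "x\<ge>0" "z>0" then have p: "f*x \<ge> 0" by simp then have q: "f + f*x > 0" using a by linarith then have "(x+1)*f > 0" "f*x+f>0" "f*(x+1) > 0" by (simp_all add: algebra_simps) with q show ?thesis using a by (simp add: field_simps) qed
lemma g5: "(x+1) / ((x + 1) * f) = 1 / (f::real)" if "x \<ge> 0" for x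
  using that by simp

lemma E: "(\<lambda>n. z^n / fact n) sums exp (z::real)"
  using exp_converges[of z] by (simp add: divide_inverse mult.commute)

lemma E1: "(\<lambda>n. z^(Suc n) / fact (Suc n)) sums (exp (z::real) - 1)"
  using E[of z] sums_Suc_iff[of "\<lambda>n. z^n / fact n"] by simp

lemma U: "(\<lambda>n. 1 / fact n :: real) sums exp 1"
  using E[of 1] by simp

lemma U1: "(\<lambda>n. 1 / fact (Suc n) :: real) sums (exp 1 - 1)"
  using E1[of 1] by simp

lemma V: "(\<lambda>n. real n / fact n) sums exp 1"
proof -
  have "(\<lambda>n. real (Suc n) / fact (Suc n)) = (\<lambda>n. 1 / fact n :: real)"
    by (rule ext) (unfold fs rs, rule g5, simp)
  then show ?thesis using U sums_Suc_iff[of "\<lambda>n. real n / fact n"] by simp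
qed

lemma Q: "(\<lambda>n. real n ^ 2 / fact n) sums (2 * exp 1)"
proof -
  have "(\<lambda>n. real (Suc n) ^ 2 / fact (Suc n)) = (\<lambda>n. real n / fact n + 1 / fact n :: real)"
    by (rule ext) (unfold fs rs, rule g1, simp_all)
  moreover have "(\<lambda>n. real n / fact n + 1 / fact n :: real) sums (exp 1 + exp 1)"
    by (rule sums_add[OF V U])
  ultimately show ?thesis using sums_Suc_iff[of "\<lambda>n. real n ^ 2 / fact n"] by simp
qed

lemma L1: "(\<lambda>n. real n * (real n / fact (n+1))) sums (exp 1 - 1)"
proof -
  have "(\<lambda>n. real n * (real n / fact (n+1))) = (\<lambda>n. real n / fact n - 1 / fact n + 1 / fact (Suc n))"
    by (rule ext) (unfold fs rs, rule g2, simp_all)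
  moreover have "(\<lambda>n. real n / fact n - 1 / fact n + 1 / fact (Suc n)) sums (exp 1 - exp 1 + (exp 1 - 1))"
    by (intro sums_add sums_diff V U U1)
  ultimately show ?thesis by simp
qed

lemma L2: "(\<lambda>n. real n ^ 2 * (real n / fact (n+1))) sums (exp 1 + 1)"
proof -
  have "(\<lambda>n. real n ^ 2 * (real n / fact (n+1))) = (\<lambda>n. real n ^ 2 / fact n - real n * (real n / fact (n+1)))"
    by (rule ext) (unfold fs rs, rule g3, simp_all)
  moreover have "(\<lambda>n. real n ^ 2 / fact n - real n * (real n / fact (n+1))) sums (2 * exp 1 - (exp 1 - 1))"
    by (intro sums_diff Q L1)
  ultimately show ?thesis by simp
qed

lemma L3: "(\<lambda>n. exp (t * real n) * (real n / fact (n+1))) sums (exp (- t) * (1 - exp (exp t) + exp (t + exp t)))"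
proof -
  define z where "z = exp t"
  have z: "z > 0" unfolding z_def by simp
  have "(\<lambda>n. exp (t * real n) * (real n / fact (n+1))) = (\<lambda>n. z^n / fact n - (1/z) * (z^(Suc n) / fact (Suc n)))"
    by (rule ext) (unfold fs rs power_Suc z_def exp_of_nat_mult[symmetric] mult.commute[of t], rule g4, simp_all)
  moreover have "(\<lambda>n. z^n / fact n - (1/z) * (z^(Suc n) / fact (Suc n))) sums (exp z - (1/z) * (exp z - 1))"
    by (intro sums_diff sums_mult E E1)
  moreover have "exp z - (1/z) * (exp z - 1) = exp (- t) * (1 - exp (exp t) + exp (t + exp t))"
    using z by (simp add: z_def exp_add exp_minus field_simps)
  ultimately show ?thesis by simp
qed


theorem mainTheorem3:
  fixes M :: "'a measure" and X :: "'a \<Rightarrow> nat"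
  assumes "prob_space M"
    and "X \<in> measurable M (count_space UNIV)"
    and "\<And>\<omega>. \<omega> \<in> space M \<Longrightarrow> X \<omega> \<ge> 1"
    and "\<And>x::nat. x \<ge> 1 \<Longrightarrow>
           measure M {\<omega> \<in> space M. X \<omega> = x} = real x / fact (x + 1)"
  shows "integrable M (\<lambda>\<omega>. real (X \<omega>))
     \<and> prob_space.expectation M (\<lambda>\<omega>. real (X \<omega>)) = exp 1 - 1
     \<and> integrable M (\<lambda>\<omega>. real (X \<omega>) ^ 2)
     \<and> prob_space.expectation M (\<lambda>\<omega>. real (X \<omega>) ^ 2) = exp 1 + 1
     \<and> prob_space.variance M (\<lambda>\<omega>. real (X \<omega>)) = exp 1 * (3 - exp 1)
     \<and> (\<forall>t::real. integrable M (\<lambda>\<omega>. exp (t * real (X \<omega>)))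
          \<and> prob_space.expectation M (\<lambda>\<omega>. exp (t * real (X \<omega>)))
              = exp (- t) * (1 - exp (exp t) + exp (t + exp t)))"
  proof -
  interpret prob_space M by (rule assms(1))
  have p: "measure M {\<omega>\<in>space M. X \<omega> = x} = real x / fact (x+1)" for x
  proof (cases "x \<ge> 1")
    case True then show ?thesis using assms(4) by simp
  next
    case False
    then have e: "{\<omega>\<in>space M. X \<omega> = x} = {}" using assms(3) by fastforce
    have "x = 0" using False by simp
    then show ?thesis unfolding e by simp
  qed
  have A: "integrable M (\<lambda>\<omega>. real (X \<omega>)) \<and> integral\<^sup>L M (\<lambda>\<omega>. real (X \<omega>)) = exp 1 - 1"
    using key[OF assms(1,2), of "\<lambda>x. real x"] L1 by (simp add: p)
  have B: "integrable M (\<lambda>\<omega>. real (X \<omega>) ^ 2) \<and> integral\<^sup>L M (\<lambda>\<omega>. real (X \<omega>) ^ 2) = exp 1 + 1"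
    using key[OF assms(1,2), of "\<lambda>x. real x ^ 2"] L2 by (simp add: p)
  have C: "integrable M (\<lambda>\<omega>. exp (t * real (X \<omega>))) \<and> integral\<^sup>L M (\<lambda>\<omega>. exp (t * real (X \<omega>)))
      = exp (- t) * (1 - exp (exp t) + exp (t + exp t))" for t
    using key[OF assms(1,2), of "\<lambda>x. exp (t * real x)"] L3[of t] by (simp add: p)
  have V: "variance (\<lambda>\<omega>. real (X \<omega>)) = exp 1 * (3 - exp 1)"
  proof -
    have "variance (\<lambda>\<omega>. real (X \<omega>)) = expectation (\<lambda>\<omega>. (real (X \<omega>))\<^sup>2) - (expectation (\<lambda>\<omega>. real (X \<omega>)))\<^sup>2"
      using A B by (intro variance_eq) auto
    also have "\<dots> = (exp 1 + 1) - (exp 1 - 1)\<^sup>2" using A B by simp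
    also have "\<dots> = exp 1 * (3 - exp 1)" by (simp add: power2_eq_square algebra_simps)
    finally show ?thesis .
  qed
  show ?thesis using A B C V by blast
qed

end
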